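(* $(\overline{\mathcal{D}},\overline{\delta},\overline{\varepsilon})$ is a comonad on $\mathsf{CART}$.
   Context: Composition in diagrammatic order. $\mathsf{CART}$ is the category of categories with finite products and functors preserving finite products strictly ($\mathsf{F}(A\times B)=\mathsf{F}A\times\mathsf{F}B$, terminal object preserved, $\mathsf{F}(\pi_j)=\pi_j$). For $\mathbb{X}$ in $\mathsf{CART}$ let $\mathsf{P}(A)=A\times A$, $\mathsf{P}(f)=f\times f$. A pre-$\mathsf{D}$-sequence $f_\bullet:A\to B$ is $(f_0,f_1,\dots)$ with $f_n:\mathsf{P}^n(A)\to B$. Tangent $\mathsf{T}(f_\bullet):\mathsf{P}(A)\to\mathsf{P}(B)$, $\mathsf{T}(f_\bullet)_n=\langle\mathsf{P}^n(\pi_0)f_n,f_{n+1}\rangle$; differential $\mathsf{D}[f_\bullet]:\mathsf{P}(A)\to B$, $\mathsf{D}[f_\bullet]_n=f_{n+1}$. $\overline{\mathcal{D}}[\mathbb{X}]$ has objects those of $\mathbb{X}$, pre-$\mathsf{D}$-sequences as maps, identity $i_\bullet$ with $i_0=1$, $i_n=\pi_1\cdots\pi_1$ ($n$ times), composition $(f_\bullet\ast g_\bullet)_n=\mathsf{T}^n(f_\bullet)_0g_n$, and finite products: terminal object of $\mathbb{X}$, projections $i_\bullet\cdot\pi_j$ with $(i_\bullet\cdot\pi_j)_n=i_n\pi_j$, pairing $\langle f_\bullet,g_\bullet\rangle_n=\langle f_n,g_n\rangle$. For $\mathsf{F}$ in $\mathsf{CART}$, $\overline{\mathcal{D}}[\mathsf{F}]$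 is $\mathsf{F}$ on objects and $\overline{\mathcal{D}}[\mathsf{F}](f_\bullet)_n=\mathsf{F}(f_n)$. $\overline{\varepsilon}:\overline{\mathcal{D}}[\mathbb{X}]\to\mathbb{X}$ is the identity on objects and $f_\bullet\mapsto f_0$. $\overline{\delta}:\overline{\mathcal{D}}[\mathbb{X}]\to\overline{\mathcal{D}}[\overline{\mathcal{D}}[\mathbb{X}]]$ is the identity on objects and sends $f_\bullet$ to the pre-$\mathsf{D}$-sequence (of $\overline{\mathcal{D}}[\mathbb{X}]$) with $0$-th term $f_\bullet$ and $n$-th term $\mathsf{D}^n[f_\bullet]$. *)

theory Defs
  imports Main
begin

text \<open>A category with chosen finite products. Composition is diagrammatic:
  Cmp C f g is "f then g", defined when Cod f = Dom g.\<close>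

record ('o, 'a) cart =
  Obj :: "'o set"
  Arr :: "'a set"
  Dom :: "'a \<Rightarrow> 'o"
  Cod :: "'a \<Rightarrow> 'o"
  Idt :: "'o \<Rightarrow> 'a"
  Cmp :: "'a \<Rightarrow> 'a \<Rightarrow> 'a"
  Prd :: "'o \<Rightarrow> 'o \<Rightarrow> 'o"
  Trm :: "'o"
  Pr0 :: "'o \<Rightarrow> 'o \<Rightarrow> 'a"
  Pr1 :: "'o \<Rightarrow> 'o \<Rightarrow> 'a"

definition hom :: "('o, 'a) cart \<Rightarrow> 'o \<Rightarrow> 'o \<Rightarrow> 'a set" where
  "hom C A B = {f \<in> Arr C. Dom C f = A \<and> Cod C f = B}"

definition category :: "('o, 'a) cart \<Rightarrow> bool" where
  "category C \<longleftrightarrow>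
     (\<forall>A\<in>Obj C. Idt C A \<in> hom C A A) \<and>
     (\<forall>f\<in>Arr C. Dom C f \<in> Obj C \<and> Cod C f \<in> Obj C) \<and>
     (\<forall>f\<in>Arr C. \<forall>g\<in>Arr C. Cod C f = Dom C g \<longrightarrow>
         Cmp C f g \<in> hom C (Dom C f) (Cod C g)) \<and>
     (\<forall>f\<in>Arr C. Cmp C (Idt C (Dom C f)) f = f \<and> Cmp C f (Idt C (Cod C f)) = f) \<and>
     (\<forall>f\<in>Arr C. \<forall>g\<in>Arr C. \<forall>h\<in>Arr C. Cod C f = Dom C g \<longrightarrow> Cod C g = Dom C h \<longrightarrow>
         Cmp C (Cmp C f g) h = Cmp C f (Cmp C g h))"

text \<open>An object of CART: a category whose chosen terminal object and chosen
  binary products (with chosen projections) satisfy the universal properties.\<close>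

definition cartesian :: "('o, 'a) cart \<Rightarrow> bool" where
  "cartesian C \<longleftrightarrow> category C \<and>
     Trm C \<in> Obj C \<and> (\<forall>A\<in>Obj C. \<exists>!h. h \<in> hom C A (Trm C)) \<and>
     (\<forall>A\<in>Obj C. \<forall>B\<in>Obj C.
        Prd C A B \<in> Obj C \<and>
        Pr0 C A B \<in> hom C (Prd C A B) A \<and>
        Pr1 C A B \<in> hom C (Prd C A B) B \<and>
        (\<forall>Z. \<forall>f\<in>hom C Z A. \<forall>g\<in>hom C Z B.
           \<exists>!h. h \<in> hom C Z (Prd C A B) \<and> Cmp C h (Pr0 C A B) = f \<and> Cmp C h (Pr1 C A B) = g))"

definition pair :: "('o, 'a) cart \<Rightarrow> 'a \<Rightarrow> 'a \<Rightarrow> 'a" where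
  "pair C f g = (THE h. h \<in> hom C (Dom C f) (Prd C (Cod C f) (Cod C g)) \<and>
      Cmp C h (Pr0 C (Cod C f) (Cod C g)) = f \<and> Cmp C h (Pr1 C (Cod C f) (Cod C g)) = g)"

definition PO :: "('o, 'a) cart \<Rightarrow> 'o \<Rightarrow> 'o" where
  "PO C A = Prd C A A"

definition PA :: "('o, 'a) cart \<Rightarrow> 'a \<Rightarrow> 'a" where
  "PA C f = pair C (Cmp C (Pr0 C (Dom C f) (Dom C f)) f) (Cmp C (Pr1 C (Dom C f) (Dom C f)) f)"

fun idseq :: "('o, 'a) cart \<Rightarrow> 'o \<Rightarrow> nat \<Rightarrow> 'a" where
  "idseq C A 0 = Idt C A"
| "idseq C A (Suc n) = Cmp C (Pr1 C ((PO C ^^ n) A) ((PO C ^^ n) A)) (idseq C A n)"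

definition Tseq :: "('o, 'a) cart \<Rightarrow> (nat \<Rightarrow> 'a) \<Rightarrow> (nat \<Rightarrow> 'a)" where
  "Tseq C f = (\<lambda>n. pair C (Cmp C ((PA C ^^ n) (Pr0 C (Dom C (f 0)) (Dom C (f 0)))) (f n))
                         (f (Suc n)))"

definition Dseq :: "(nat \<Rightarrow> 'a) \<Rightarrow> (nat \<Rightarrow> 'a)" where
  "Dseq f = (\<lambda>n. f (Suc n))"

definition compD :: "('o, 'a) cart \<Rightarrow> (nat \<Rightarrow> 'a) \<Rightarrow> (nat \<Rightarrow> 'a) \<Rightarrow> (nat \<Rightarrow> 'a)" where
  "compD C f g = (\<lambda>n. Cmp C ((Tseq C ^^ n) f 0) (g n))"

definition Dbar :: "('o, 'a) cart \<Rightarrow> ('o, nat \<Rightarrow> 'a) cart" where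
  "Dbar C = \<lparr> Obj = Obj C,
     Arr = {f. \<forall>n. f n \<in> hom C ((PO C ^^ n) (Dom C (f 0))) (Cod C (f 0))},
     Dom = (\<lambda>f. Dom C (f 0)),
     Cod = (\<lambda>f. Cod C (f 0)),
     Idt = idseq C,
     Cmp = compD C,
     Prd = Prd C,
     Trm = Trm C,
     Pr0 = (\<lambda>A B n. Cmp C (idseq C (Prd C A B) n) (Pr0 C A B)),
     Pr1 = (\<lambda>A B n. Cmp C (idseq C (Prd C A B) n) (Pr1 C A B)) \<rparr>"

type_synonym ('o, 'a, 'p, 'b) cfun = "('o \<Rightarrow> 'p) \<times> ('a \<Rightarrow> 'b)"

definition is_functor :: "('o, 'a) cart \<Rightarrow> ('p, 'b) cart \<Rightarrow> ('o, 'a, 'p, 'b) cfun \<Rightarrow> bool" where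
  "is_functor C D F \<longleftrightarrow>
     (\<forall>A\<in>Obj C. fst F A \<in> Obj D) \<and>
     (\<forall>f\<in>Arr C. snd F f \<in> hom D (fst F (Dom C f)) (fst F (Cod C f))) \<and>
     (\<forall>A\<in>Obj C. snd F (Idt C A) = Idt D (fst F A)) \<and>
     (\<forall>f\<in>Arr C. \<forall>g\<in>Arr C. Cod C f = Dom C g \<longrightarrow> snd F (Cmp C f g) = Cmp D (snd F f) (snd F g))"

text \<open>Morphisms of CART: functors strictly preserving the chosen finite products.\<close>

definition cart_functor :: "('o, 'a) cart \<Rightarrow> ('p, 'b) cart \<Rightarrow> ('o, 'a, 'p, 'b) cfun \<Rightarrow> bool" where
  "cart_functor C D F \<longleftrightarrow> cartesian C \<and> cartesian D \<and> is_functor C D F \<and>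
     fst F (Trm C) = Trm D \<and>
     (\<forall>A\<in>Obj C. \<forall>B\<in>Obj C.
        fst F (Prd C A B) = Prd D (fst F A) (fst F B) \<and>
        snd F (Pr0 C A B) = Pr0 D (fst F A) (fst F B) \<and>
        snd F (Pr1 C A B) = Pr1 D (fst F A) (fst F B))"

definition feq :: "('o, 'a) cart \<Rightarrow> ('o, 'a, 'p, 'b) cfun \<Rightarrow> ('o, 'a, 'p, 'b) cfun \<Rightarrow> bool" where
  "feq C F G \<longleftrightarrow> (\<forall>A\<in>Obj C. fst F A = fst G A) \<and> (\<forall>f\<in>Arr C. snd F f = snd G f)"

definition fcmp :: "('o, 'a, 'p, 'b) cfun \<Rightarrow> ('p, 'b, 'q, 'c) cfun \<Rightarrow> ('o, 'a, 'q, 'c) cfun" where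
  "fcmp F G = (fst G \<circ> fst F, snd G \<circ> snd F)"

definition fid :: "('o, 'a, 'o, 'a) cfun" where
  "fid = (id, id)"

definition Dbar_map :: "('o, 'a, 'p, 'b) cfun \<Rightarrow> ('o, nat \<Rightarrow> 'a, 'p, nat \<Rightarrow> 'b) cfun" where
  "Dbar_map F = (fst F, \<lambda>f n. snd F (f n))"

definition counit :: "('o, nat \<Rightarrow> 'a, 'o, 'a) cfun" where
  "counit = (id, \<lambda>f. f 0)"

definition comult :: "('o, nat \<Rightarrow> 'a, 'o, nat \<Rightarrow> nat \<Rightarrow> 'a) cfun" where
  "comult = (id, \<lambda>f n. (Dseq ^^ n) f)"

end

theory Submission
  imports Defs
begin

definition isD :: "('o, 'a) cart \<Rightarrow> 'o \<Rightarrow> 'o \<Rightarrow> (nat \<Rightarrow> 'a) \<Rightarrow> bool" where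
  "isD C A B f \<longleftrightarrow> (\<forall>n. f n \<in> hom C ((PO C ^^ n) A) B)"

definition Lf :: "('o, 'a) cart \<Rightarrow> 'o \<Rightarrow> 'a \<Rightarrow> (nat \<Rightarrow> 'a)" where
  "Lf C A x = (\<lambda>n. Cmp C (idseq C A n) x)"

lemma hom_Dbar: "hom (Dbar C) A B = {f. isD C A B f}"
  unfolding hom_def Dbar_def isD_def
  by auto

lemma Dbar_simps[simp]:
  "Obj (Dbar C) = Obj C" "Dom (Dbar C) f = Dom C (f 0)" "Cod (Dbar C) f = Cod C (f 0)"
  "Idt (Dbar C) = idseq C" "Cmp (Dbar C) = compD C" "Prd (Dbar C) = Prd C" "Trm (Dbar C) = Trm C"
  "Pr0 (Dbar C) A B = Lf C (Prd C A B) (Pr0 C A B)"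
  "Pr1 (Dbar C) A B = Lf C (Prd C A B) (Pr1 C A B)"
  "Arr (Dbar C) = {f. isD C (Dom C (f 0)) (Cod C (f 0)) f}"
  by (auto simp: Dbar_def Lf_def isD_def)

lemma PO_Dbar[simp]: "PO (Dbar C) = PO C"
  by (auto simp: PO_def fun_eq_iff)

locale cartcat =
  fixes C :: "('o, 'a) cart"
  assumes cart: "cartesian C"
begin

abbreviation cmp (infixl "\<cdot>" 70) where "f \<cdot> g \<equiv> Cmp C f g"
abbreviation po where "po n A \<equiv> (PO C ^^ n) A"
abbreviation pa where "pa n f \<equiv> (PA C ^^ n) f"

lemma cat: "category C" using cart cartesian_def by blast

lemma hom_iff: "f \<in> hom C A B \<longleftrightarrow> f \<in> Arr C \<and> Dom C f = A \<and> Cod C f = B"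
  by (simp add: hom_def)

lemma hom_obj: "f \<in> hom C A B \<Longrightarrow> A \<in> Obj C \<and> B \<in> Obj C"
  using cat unfolding category_def hom_def by auto

lemma comp_hom: "f \<in> hom C A B \<Longrightarrow> g \<in> hom C B D \<Longrightarrow> f \<cdot> g \<in> hom C A D"
  using cat unfolding category_def hom_def by auto

lemma id_hom: "A \<in> Obj C \<Longrightarrow> Idt C A \<in> hom C A A"
  using cat unfolding category_def by auto

lemma id_l: "f \<in> hom C A B \<Longrightarrow> Idt C A \<cdot> f = f"
  using cat unfolding category_def hom_def by auto

lemma id_r: "f \<in> hom C A B \<Longrightarrow> f \<cdot> Idt C B = f"
  using cat unfolding category_def hom_def by auto

lemma assoc: "f \<in> hom C A B \<Longrightarrow> g \<in> hom C B D \<Longrightarrow> h \<in> hom C D E \<Longrightarrow> (f \<cdot> g) \<cdot> h = f \<cdot> (g \<cdot> h)"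
  using cat unfolding category_def hom_def by auto

lemma trm_obj: "Trm C \<in> Obj C" using cart cartesian_def by blast
lemma trm_unique: assumes "A \<in> Obj C" shows "\<exists>!h. h \<in> hom C A (Trm C)"
proof -
  from cart have "\<forall>A\<in>Obj C. \<exists>!h. h \<in> hom C A (Trm C)" unfolding cartesian_def by (elim conjE)
  then show ?thesis using assms by (rule bspec)
qed

lemma prod_ax: assumes A: "A \<in> Obj C" and B: "B \<in> Obj C"
  shows "Prd C A B \<in> Obj C \<and>
        Pr0 C A B \<in> hom C (Prd C A B) A \<and>
        Pr1 C A B \<in> hom C (Prd C A B) B \<and>
        (\<forall>Z. \<forall>f\<in>hom C Z A. \<forall>g\<in>hom C Z B.
           \<exists>!h. h \<in> hom C Z (Prd C A B) \<and> Cmp C h (Pr0 C A B) = f \<and> Cmp C h (Pr1 C A B) = g)"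
proof -
  from cart have "\<forall>A\<in>Obj C. \<forall>B\<in>Obj C.
        Prd C A B \<in> Obj C \<and>
        Pr0 C A B \<in> hom C (Prd C A B) A \<and>
        Pr1 C A B \<in> hom C (Prd C A B) B \<and>
        (\<forall>Z. \<forall>f\<in>hom C Z A. \<forall>g\<in>hom C Z B.
           \<exists>!h. h \<in> hom C Z (Prd C A B) \<and> Cmp C h (Pr0 C A B) = f \<and> Cmp C h (Pr1 C A B) = g)"
    unfolding cartesian_def by (elim conjE)
  then show ?thesis by (rule bspec[OF bspec[OF _ A] B])
qed

lemma prd_obj: "A \<in> Obj C \<Longrightarrow> B \<in> Obj C \<Longrightarrow> Prd C A B \<in> Obj C"
  using prod_ax by blast
lemma pr0_hom: "A \<in> Obj C \<Longrightarrow> B \<in> Obj C \<Longrightarrow> Pr0 C A B \<in> hom C (Prd C A B) A"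
  using prod_ax by blast
lemma pr1_hom: "A \<in> Obj C \<Longrightarrow> B \<in> Obj C \<Longrightarrow> Pr1 C A B \<in> hom C (Prd C A B) B"
  using prod_ax by blast
lemma prod_univ: "A \<in> Obj C \<Longrightarrow> B \<in> Obj C \<Longrightarrow> f \<in> hom C Z A \<Longrightarrow> g \<in> hom C Z B \<Longrightarrow>
  \<exists>!h. h \<in> hom C Z (Prd C A B) \<and> h \<cdot> Pr0 C A B = f \<and> h \<cdot> Pr1 C A B = g"
proof -
  assume A: "A \<in> Obj C" and B: "B \<in> Obj C" and f: "f \<in> hom C Z A" and g: "g \<in> hom C Z B"
  have "\<forall>Z. \<forall>f\<in>hom C Z A. \<forall>g\<in>hom C Z B.
           \<exists>!h. h \<in> hom C Z (Prd C A B) \<and> Cmp C h (Pr0 C A B) = f \<and> Cmp C h (Pr1 C A B) = g"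
    using prod_ax[OF A B] by (elim conjE)
  then show ?thesis using f g by blast
qed

lemma pair_props:
  assumes f: "f \<in> hom C Z A" and g: "g \<in> hom C Z B"
  shows "pair C f g \<in> hom C Z (Prd C A B) \<and> pair C f g \<cdot> Pr0 C A B = f \<and> pair C f g \<cdot> Pr1 C A B = g"
proof -
  have A: "A \<in> Obj C" and B: "B \<in> Obj C" using hom_obj f g by auto
  have d: "Dom C f = Z" "Cod C f = A" "Cod C g = B" using f g by (auto simp: hom_def)
  show ?thesis unfolding pair_def d
    by (rule theI'[OF prod_univ[OF A B f g]])
qed

lemma pair_hom: "f \<in> hom C Z A \<Longrightarrow> g \<in> hom C Z B \<Longrightarrow> pair C f g \<in> hom C Z (Prd C A B)"
  using pair_props by blast
lemma pair_pr0: "f \<in> hom C Z A \<Longrightarrow> g \<in> hom C Z B \<Longrightarrow> pair C f g \<cdot> Pr0 C A B = f"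
  using pair_props by blast
lemma pair_pr1: "f \<in> hom C Z A \<Longrightarrow> g \<in> hom C Z B \<Longrightarrow> pair C f g \<cdot> Pr1 C A B = g"
  using pair_props by blast

lemma pair_unique:
  assumes f: "f \<in> hom C Z A" and g: "g \<in> hom C Z B" and h: "h \<in> hom C Z (Prd C A B)"
    and "h \<cdot> Pr0 C A B = f" "h \<cdot> Pr1 C A B = g"
  shows "pair C f g = h"
proof -
  have A: "A \<in> Obj C" and B: "B \<in> Obj C" using hom_obj f g by auto
  show ?thesis using prod_univ[OF A B f g] pair_props[OF f g] h assms(4,5) by blast
qed

lemma prod_ext:
  assumes h: "h \<in> hom C Z (Prd C A B)" and k: "k \<in> hom C Z (Prd C A B)"
    and A: "A \<in> Obj C" and B: "B \<in> Obj C"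
    and "h \<cdot> Pr0 C A B = k \<cdot> Pr0 C A B" "h \<cdot> Pr1 C A B = k \<cdot> Pr1 C A B"
  shows "h = k"
proof -
  have f: "k \<cdot> Pr0 C A B \<in> hom C Z A" by (rule comp_hom[OF k pr0_hom[OF A B]])
  have g: "k \<cdot> Pr1 C A B \<in> hom C Z B" by (rule comp_hom[OF k pr1_hom[OF A B]])
  show ?thesis using prod_univ[OF A B f g] h k assms(5,6) by blast
qed

lemma pair_comp:
  assumes h: "h \<in> hom C W Z" and f: "f \<in> hom C Z A" and g: "g \<in> hom C Z B"
  shows "h \<cdot> pair C f g = pair C (h \<cdot> f) (h \<cdot> g)"
proof -
  have A: "A \<in> Obj C" and B: "B \<in> Obj C" using hom_obj f g by auto
  show ?thesis
    apply (rule sym, rule pair_unique[OF comp_hom[OF h f] comp_hom[OF h g]])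
    using comp_hom[OF h pair_hom[OF f g]] apply simp
    using assoc[OF h pair_hom[OF f g] pr0_hom[OF A B]] pair_pr0[OF f g] apply simp
    using assoc[OF h pair_hom[OF f g] pr1_hom[OF A B]] pair_pr1[OF f g] apply simp
    done
qed

lemma PO_obj: "A \<in> Obj C \<Longrightarrow> PO C A \<in> Obj C"
  by (simp add: PO_def prd_obj)

lemma po_obj: "A \<in> Obj C \<Longrightarrow> po n A \<in> Obj C"
  by (induction n) (auto simp: PO_obj)

lemma PA_alt: "f \<in> hom C A B \<Longrightarrow> PA C f = pair C (Pr0 C A A \<cdot> f) (Pr1 C A A \<cdot> f)"
  by (simp add: PA_def hom_def)

lemma PA_props:
  assumes f: "f \<in> hom C A B"
  shows "PA C f \<in> hom C (PO C A) (PO C B) \<and> PA C f \<cdot> Pr0 C B B = Pr0 C A A \<cdot> f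
       \<and> PA C f \<cdot> Pr1 C B B = Pr1 C A A \<cdot> f"
proof -
  have A: "A \<in> Obj C" and B: "B \<in> Obj C" using hom_obj f by auto
  have a: "Pr0 C A A \<cdot> f \<in> hom C (PO C A) B" using comp_hom[OF pr0_hom[OF A A] f] by (simp add: PO_def)
  have b: "Pr1 C A A \<cdot> f \<in> hom C (PO C A) B" using comp_hom[OF pr1_hom[OF A A] f] by (simp add: PO_def)
  show ?thesis unfolding PA_alt[OF f] using pair_props[OF a b] by (simp add: PO_def)
qed

lemma PA_hom: "f \<in> hom C A B \<Longrightarrow> PA C f \<in> hom C (PO C A) (PO C B)" using PA_props by blast
lemma PA_pr0: "f \<in> hom C A B \<Longrightarrow> PA C f \<cdot> Pr0 C B B = Pr0 C A A \<cdot> f" using PA_props by blast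
lemma PA_pr1: "f \<in> hom C A B \<Longrightarrow> PA C f \<cdot> Pr1 C B B = Pr1 C A A \<cdot> f" using PA_props by blast

lemma PA_ext:
  assumes "h \<in> hom C Z (PO C A)" "k \<in> hom C Z (PO C A)" "A \<in> Obj C"
    "h \<cdot> Pr0 C A A = k \<cdot> Pr0 C A A" "h \<cdot> Pr1 C A A = k \<cdot> Pr1 C A A"
  shows "h = k"
  using prod_ext[of h Z A A k] assms by (simp add: PO_def)

lemma PA_comp:
  assumes f: "f \<in> hom C A B" and g: "g \<in> hom C B D"
  shows "PA C (f \<cdot> g) = PA C f \<cdot> PA C g"
proof -
  have A: "A \<in> Obj C" and B: "B \<in> Obj C" and D: "D \<in> Obj C" using hom_obj f g by auto
  have fg: "f \<cdot> g \<in> hom C A D" by (rule comp_hom[OF f g])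
  have p0: "\<And>X. X \<in> Obj C \<Longrightarrow> Pr0 C X X \<in> hom C (PO C X) X" using pr0_hom by (simp add: PO_def)
  have p1: "\<And>X. X \<in> Obj C \<Longrightarrow> Pr1 C X X \<in> hom C (PO C X) X" using pr1_hom by (simp add: PO_def)
  show ?thesis
  proof (rule PA_ext[OF PA_hom[OF fg] comp_hom[OF PA_hom[OF f] PA_hom[OF g]] D])
    show "PA C (f \<cdot> g) \<cdot> Pr0 C D D = PA C f \<cdot> PA C g \<cdot> Pr0 C D D"
      by (simp add: PA_pr0[OF fg] assoc[OF PA_hom[OF f] PA_hom[OF g] p0[OF D]] PA_pr0[OF g]
          flip: assoc[OF PA_hom[OF f] p0[OF B] g] assoc[OF p0[OF A] f g] PA_pr0[OF f])
    show "PA C (f \<cdot> g) \<cdot> Pr1 C D D = PA C f \<cdot> PA C g \<cdot> Pr1 C D D"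
      by (simp add: PA_pr1[OF fg] assoc[OF PA_hom[OF f] PA_hom[OF g] p1[OF D]] PA_pr1[OF g]
          flip: assoc[OF PA_hom[OF f] p1[OF B] g] assoc[OF p1[OF A] f g] PA_pr1[OF f])
  qed
qed

lemma pr0P: "X \<in> Obj C \<Longrightarrow> Pr0 C X X \<in> hom C (PO C X) X" using pr0_hom by (simp add: PO_def)
lemma pr1P: "X \<in> Obj C \<Longrightarrow> Pr1 C X X \<in> hom C (PO C X) X" using pr1_hom by (simp add: PO_def)

lemma pa_hom: "f \<in> hom C A B \<Longrightarrow> pa n f \<in> hom C (po n A) (po n B)"
  by (induction n) (auto simp: PA_hom)

lemma pa_comp: assumes f: "f \<in> hom C A B" and g: "g \<in> hom C B D" shows "pa n (f \<cdot> g) = pa n f \<cdot> pa n g"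
  by (induction n) (auto simp: PA_comp[OF pa_hom[OF f] pa_hom[OF g]])


lemma pa_id: "A \<in> Obj C \<Longrightarrow> pa n (Idt C A) = Idt C (po n A)"
proof (induction n)
  case (Suc n)
  have "PA C (Idt C (po n A)) = Idt C (PO C (po n A))"
  proof -
    have X: "po n A \<in> Obj C" using po_obj Suc.prems by blast
    show ?thesis
      apply (rule PA_ext[OF PA_hom[OF id_hom[OF X]] id_hom[OF PO_obj[OF X]] X])
      by (simp_all add: PA_pr0[OF id_hom[OF X]] PA_pr1[OF id_hom[OF X]] id_l[OF pr0P[OF X]]
          id_r[OF pr0P[OF X]] id_l[OF pr1P[OF X]] id_r[OF pr1P[OF X]])
  qed
  then show ?case using Suc by simp
qed simp

lemma idseq_hom: "A \<in> Obj C \<Longrightarrow> idseq C A n \<in> hom C (po n A) A"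
proof (induction n)
  case 0 then show ?case by (simp add: id_hom)
next
  case (Suc n)
  then show ?case using comp_hom[OF pr1P[OF po_obj] Suc.IH] Suc.prems by simp
qed

lemma idseq_nat: "f \<in> hom C A B \<Longrightarrow> pa n f \<cdot> idseq C B n = idseq C A n \<cdot> f"
proof (induction n)
  case 0 then show ?case using id_l id_r by simp
next
  case (Suc n)
  have A: "A \<in> Obj C" and B: "B \<in> Obj C" using hom_obj Suc.prems by auto
  have pf: "pa n f \<in> hom C (po n A) (po n B)" by (rule pa_hom[OF Suc.prems])
  have "pa (Suc n) f \<cdot> idseq C B (Suc n) = PA C (pa n f) \<cdot> (Pr1 C (po n B) (po n B) \<cdot> idseq C B n)"
    by simp
  also have "\<dots> = (PA C (pa n f) \<cdot> Pr1 C (po n B) (po n B)) \<cdot> idseq C B n"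
    by (rule assoc[symmetric, OF PA_hom[OF pf] pr1P[OF po_obj[OF B]] idseq_hom[OF B]])
  also have "\<dots> = (Pr1 C (po n A) (po n A) \<cdot> pa n f) \<cdot> idseq C B n"
    by (simp add: PA_pr1[OF pf])
  also have "\<dots> = Pr1 C (po n A) (po n A) \<cdot> (idseq C A n \<cdot> f)"
    using assoc[OF pr1P[OF po_obj[OF A]] pf idseq_hom[OF B]] Suc.IH[OF Suc.prems] by simp
  also have "\<dots> = idseq C A (Suc n) \<cdot> f"
    using assoc[OF pr1P[OF po_obj[OF A]] idseq_hom[OF A] Suc.prems] by simp
  finally show ?case .
qed

lemma po_Suc': "po (Suc n) A = po n (PO C A)"
  by (simp add: funpow_Suc_right del: funpow.simps)

lemma po_add: "po (k + m) A = po k (po m A)"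
  by (simp add: funpow_add)

lemma pa_Suc': "pa (Suc n) f = pa n (PA C f)"
  by (simp add: funpow_Suc_right del: funpow.simps)

lemma pa_add: "pa (k + m) f = pa k (pa m f)"
  by (simp add: funpow_add)

lemma idseq_Suc': "A \<in> Obj C \<Longrightarrow> idseq C A (Suc n) = idseq C (PO C A) n \<cdot> Pr1 C A A"
proof (induction n)
  case 0 then show ?case using id_l[OF pr1P] id_r[OF pr1P] by simp
next
  case (Suc n)
  have "idseq C A (Suc (Suc n)) = Pr1 C (po (Suc n) A) (po (Suc n) A) \<cdot> idseq C A (Suc n)"
    by (simp del: funpow.simps)
  also have "\<dots> = Pr1 C (po n (PO C A)) (po n (PO C A)) \<cdot> (idseq C (PO C A) n \<cdot> Pr1 C A A)"
    by (simp only: po_Suc' Suc.IH[OF Suc.prems])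
  also have "\<dots> = idseq C (PO C A) (Suc n) \<cdot> Pr1 C A A"
    using assoc[OF pr1P[OF po_obj[OF PO_obj]] idseq_hom[OF PO_obj] pr1P] Suc.prems by simp
  finally show ?case .
qed

lemma idseq_add: "A \<in> Obj C \<Longrightarrow> idseq C A (k + m) = idseq C (po m A) k \<cdot> idseq C A m"
proof (induction k)
  case 0 then show ?case using id_l[OF idseq_hom] by simp
next
  case (Suc k)
  have "idseq C A (Suc k + m) = Pr1 C (po (k+m) A) (po (k+m) A) \<cdot> idseq C A (k + m)"
    by simp
  also have "\<dots> = Pr1 C (po k (po m A)) (po k (po m A)) \<cdot> (idseq C (po m A) k \<cdot> idseq C A m)"
    using Suc by (simp add: po_add del: funpow.simps)
  also have "\<dots> = idseq C (po m A) (Suc k) \<cdot> idseq C A m"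
    using assoc[OF pr1P[OF po_obj[OF po_obj]] idseq_hom[OF po_obj] idseq_hom] Suc.prems by simp
  finally show ?case .
qed

lemma isD_hom: "isD C A B f \<Longrightarrow> f n \<in> hom C (po n A) B"
  by (simp add: isD_def)

lemma isD_0: assumes "isD C A B f"
  shows "f 0 \<in> hom C A B" "Dom C (f 0) = A" "Cod C (f 0) = B" "A \<in> Obj C" "B \<in> Obj C"
  using isD_hom[OF assms, of 0] hom_obj by (auto simp: hom_def)

lemma isD_idseq: "A \<in> Obj C \<Longrightarrow> isD C A A (idseq C A)"
  by (simp add: isD_def idseq_hom)

lemma Tseq_alt: "isD C A B f \<Longrightarrow> Tseq C f n = pair C (pa n (Pr0 C A A) \<cdot> f n) (f (Suc n))"
  by (simp add: Tseq_def isD_0)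

lemma T_parts:
  assumes f: "isD C A B f"
  shows "pa n (Pr0 C A A) \<cdot> f n \<in> hom C (po n (PO C A)) B" "f (Suc n) \<in> hom C (po n (PO C A)) B"
proof -
  have A: "A \<in> Obj C" using isD_0[OF f] by simp
  show "pa n (Pr0 C A A) \<cdot> f n \<in> hom C (po n (PO C A)) B"
    by (rule comp_hom[OF pa_hom[OF pr0P[OF A]] isD_hom[OF f]])
  show "f (Suc n) \<in> hom C (po n (PO C A)) B"
    using isD_hom[OF f, of "Suc n"] by (simp only: po_Suc')
qed

lemma T_hom: "isD C A B f \<Longrightarrow> Tseq C f n \<in> hom C (po n (PO C A)) (PO C B)"
  using pair_hom[OF T_parts] by (simp add: Tseq_alt PO_def)

lemma T_isD: "isD C A B f \<Longrightarrow> isD C (PO C A) (PO C B) (Tseq C f)"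
  using T_hom by (simp add: isD_def)

lemma T_pr0: "isD C A B f \<Longrightarrow> Tseq C f n \<cdot> Pr0 C B B = pa n (Pr0 C A A) \<cdot> f n"
  using pair_pr0[OF T_parts] by (simp add: Tseq_alt)

lemma T_pr1: "isD C A B f \<Longrightarrow> Tseq C f n \<cdot> Pr1 C B B = f (Suc n)"
  using pair_pr1[OF T_parts] by (simp add: Tseq_alt)

lemma Tn_isD: "isD C A B f \<Longrightarrow> isD C (po n A) (po n B) ((Tseq C ^^ n) f)"
  by (induction n) (auto simp: T_isD)

lemma Tn_idr: "isD C A B f \<Longrightarrow> (Tseq C ^^ n) f k \<cdot> idseq C B n = f (k + n)"
proof (induction n arbitrary: k)
  case 0 then show ?case using id_r[OF isD_hom[OF 0]] by simp
next
  case (Suc n)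
  have B: "B \<in> Obj C" using isD_0[OF Suc.prems] by simp
  have g: "isD C (po n A) (po n B) ((Tseq C ^^ n) f)" by (rule Tn_isD[OF Suc.prems])
  have "(Tseq C ^^ Suc n) f k \<cdot> idseq C B (Suc n)
      = Tseq C ((Tseq C ^^ n) f) k \<cdot> (Pr1 C (po n B) (po n B) \<cdot> idseq C B n)" by simp
  also have "\<dots> = (Tseq C ((Tseq C ^^ n) f) k \<cdot> Pr1 C (po n B) (po n B)) \<cdot> idseq C B n"
    by (rule assoc[symmetric, OF T_hom[OF g] pr1P[OF po_obj[OF B]] idseq_hom[OF B]])
  also have "\<dots> = f (Suc k + n)" using T_pr1[OF g] Suc.IH[OF Suc.prems] by simp
  finally show ?case by simp
qed

lemma compD_idr: "isD C A B f \<Longrightarrow> compD C f (idseq C B) = f"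
  using Tn_idr[of A B f _ 0] by (simp add: compD_def fun_eq_iff)

lemma T_id: assumes A: "A \<in> Obj C" shows "Tseq C (idseq C A) = idseq C (PO C A)"
proof
  fix k
  have i: "isD C A A (idseq C A)" by (rule isD_idseq[OF A])
  show "Tseq C (idseq C A) k = idseq C (PO C A) k"
  proof (rule PA_ext[OF T_hom[OF i] idseq_hom[OF PO_obj[OF A]] A])
    show "Tseq C (idseq C A) k \<cdot> Pr0 C A A = idseq C (PO C A) k \<cdot> Pr0 C A A"
      using T_pr0[OF i] idseq_nat[OF pr0P[OF A], of k] by simp
    show "Tseq C (idseq C A) k \<cdot> Pr1 C A A = idseq C (PO C A) k \<cdot> Pr1 C A A"
      using T_pr1[OF i] idseq_Suc'[OF A, of k] by simp
  qed
qed

lemma Tn_id: "A \<in> Obj C \<Longrightarrow> (Tseq C ^^ n) (idseq C A) = idseq C (po n A)"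
  by (induction n) (auto simp: T_id po_obj)

lemma compD_idl: "isD C A B g \<Longrightarrow> compD C (idseq C A) g = g"
proof -
  assume g: "isD C A B g"
  have A: "A \<in> Obj C" using isD_0[OF g] by simp
  show ?thesis using id_l[OF isD_hom[OF g]] by (simp add: compD_def fun_eq_iff Tn_id[OF A])
qed

lemma T_pi0: assumes f: "isD C A B f"
  shows "(Tseq C ^^ k) (Tseq C f) m \<cdot> pa k (Pr0 C B B) = pa m (pa k (Pr0 C A A)) \<cdot> (Tseq C ^^ k) f m"
proof (induction k arbitrary: m)
  case 0 then show ?case using T_pr0[OF f] by simp
next
  case (Suc k)
  have A: "A \<in> Obj C" and B: "B \<in> Obj C" using isD_0[OF f] by auto
  define g where "g = (Tseq C ^^ k) (Tseq C f)"
  define h where "h = (Tseq C ^^ k) f"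
  define q where "q = pa k (Pr0 C B B)"
  define r where "r = pa k (Pr0 C A A)"
  have g: "isD C (po k (PO C A)) (po k (PO C B)) g" unfolding g_def by (rule Tn_isD[OF T_isD[OF f]])
  have h: "isD C (po k A) (po k B) h" unfolding h_def by (rule Tn_isD[OF f])
  have q: "q \<in> hom C (po k (PO C B)) (po k B)" unfolding q_def by (rule pa_hom[OF pr0P[OF B]])
  have r: "r \<in> hom C (po k (PO C A)) (po k A)" unfolding r_def by (rule pa_hom[OF pr0P[OF A]])
  have IH: "\<And>m. g m \<cdot> q = pa m r \<cdot> h m" using Suc.IH unfolding g_def h_def q_def r_def by simp
  have kA: "po k A \<in> Obj C" "po k (PO C A) \<in> Obj C" "po k B \<in> Obj C" "po k (PO C B) \<in> Obj C"
    using po_obj PO_obj A B by auto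
  have Tg: "Tseq C g m \<in> hom C (po m (PO C (po k (PO C A)))) (PO C (po k (PO C B)))" by (rule T_hom[OF g])
  have Th: "Tseq C h m \<in> hom C (po m (PO C (po k A))) (PO C (po k B))" by (rule T_hom[OF h])
  have PAr: "pa m (PA C r) \<in> hom C (po m (PO C (po k (PO C A)))) (po m (PO C (po k A)))"
    by (rule pa_hom[OF PA_hom[OF r]])
  have p0a: "pa m (Pr0 C (po k (PO C A)) (po k (PO C A))) \<in> hom C (po m (PO C (po k (PO C A)))) (po m (po k (PO C A)))"
    by (rule pa_hom[OF pr0P[OF kA(2)]])
  have p0b: "pa m (Pr0 C (po k A) (po k A)) \<in> hom C (po m (PO C (po k A))) (po m (po k A))"
    by (rule pa_hom[OF pr0P[OF kA(1)]])
  have key: "Tseq C g m \<cdot> PA C q = pa m (PA C r) \<cdot> Tseq C h m"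
  proof (rule PA_ext[OF comp_hom[OF Tg PA_hom[OF q]] comp_hom[OF PAr Th] kA(3)])
    have "Tseq C g m \<cdot> PA C q \<cdot> Pr0 C (po k B) (po k B) = Tseq C g m \<cdot> (PA C q \<cdot> Pr0 C (po k B) (po k B))"
      by (rule assoc[OF Tg PA_hom[OF q] pr0P[OF kA(3)]])
    also have "\<dots> = Tseq C g m \<cdot> (Pr0 C (po k (PO C B)) (po k (PO C B)) \<cdot> q)" by (simp add: PA_pr0[OF q])
    also have "\<dots> = (Tseq C g m \<cdot> Pr0 C (po k (PO C B)) (po k (PO C B))) \<cdot> q"
      by (rule assoc[symmetric, OF Tg pr0P[OF kA(4)] q])
    also have "\<dots> = (pa m (Pr0 C (po k (PO C A)) (po k (PO C A))) \<cdot> g m) \<cdot> q" by (simp add: T_pr0[OF g])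
    also have "\<dots> = pa m (Pr0 C (po k (PO C A)) (po k (PO C A))) \<cdot> (pa m r \<cdot> h m)"
      using assoc[OF p0a isD_hom[OF g] q] IH by simp
    also have "\<dots> = (pa m (Pr0 C (po k (PO C A)) (po k (PO C A))) \<cdot> pa m r) \<cdot> h m"
      by (rule assoc[symmetric, OF p0a pa_hom[OF r] isD_hom[OF h]])
    also have "\<dots> = pa m (PA C r \<cdot> Pr0 C (po k A) (po k A)) \<cdot> h m"
      by (simp add: pa_comp[OF pr0P[OF kA(2)] r, symmetric] PA_pr0[OF r])
    also have "\<dots> = (pa m (PA C r) \<cdot> pa m (Pr0 C (po k A) (po k A))) \<cdot> h m"
      by (simp add: pa_comp[OF PA_hom[OF r] pr0P[OF kA(1)]])
    also have "\<dots> = pa m (PA C r) \<cdot> (pa m (Pr0 C (po k A) (po k A)) \<cdot> h m)"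
      by (rule assoc[OF PAr p0b isD_hom[OF h]])
    also have "\<dots> = pa m (PA C r) \<cdot> (Tseq C h m \<cdot> Pr0 C (po k B) (po k B))" by (simp add: T_pr0[OF h])
    also have "\<dots> = pa m (PA C r) \<cdot> Tseq C h m \<cdot> Pr0 C (po k B) (po k B)"
      by (rule assoc[symmetric, OF PAr Th pr0P[OF kA(3)]])
    finally show "Tseq C g m \<cdot> PA C q \<cdot> Pr0 C (po k B) (po k B) = pa m (PA C r) \<cdot> Tseq C h m \<cdot> Pr0 C (po k B) (po k B)" .
  next
    have "Tseq C g m \<cdot> PA C q \<cdot> Pr1 C (po k B) (po k B) = Tseq C g m \<cdot> (PA C q \<cdot> Pr1 C (po k B) (po k B))"
      by (rule assoc[OF Tg PA_hom[OF q] pr1P[OF kA(3)]])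
    also have "\<dots> = Tseq C g m \<cdot> (Pr1 C (po k (PO C B)) (po k (PO C B)) \<cdot> q)" by (simp add: PA_pr1[OF q])
    also have "\<dots> = (Tseq C g m \<cdot> Pr1 C (po k (PO C B)) (po k (PO C B))) \<cdot> q"
      by (rule assoc[symmetric, OF Tg pr1P[OF kA(4)] q])
    also have "\<dots> = g (Suc m) \<cdot> q" by (simp add: T_pr1[OF g])
    also have "\<dots> = pa (Suc m) r \<cdot> h (Suc m)" by (rule IH)
    also have "\<dots> = pa m (PA C r) \<cdot> (Tseq C h m \<cdot> Pr1 C (po k B) (po k B))"
      by (simp add: T_pr1[OF h] pa_Suc' del: funpow.simps)
    also have "\<dots> = pa m (PA C r) \<cdot> Tseq C h m \<cdot> Pr1 C (po k B) (po k B)"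
      by (rule assoc[symmetric, OF PAr Th pr1P[OF kA(3)]])
    finally show "Tseq C g m \<cdot> PA C q \<cdot> Pr1 C (po k B) (po k B) = pa m (PA C r) \<cdot> Tseq C h m \<cdot> Pr1 C (po k B) (po k B)" .
  qed
  then show ?case unfolding g_def h_def q_def r_def by simp
qed


lemma compD_isD: assumes f: "isD C A B f" and g: "isD C B D g"
  shows "isD C A D (compD C f g)"
  unfolding isD_def compD_def
proof
  fix n
  have "(Tseq C ^^ n) f 0 \<in> hom C (po n A) (po n B)" using isD_hom[OF Tn_isD[OF f], of n 0] by simp
  then show "(Tseq C ^^ n) f 0 \<cdot> g n \<in> hom C (po n A) D" using comp_hom isD_hom[OF g] by blast
qed

lemma Tn0_hom: "isD C A B f \<Longrightarrow> (Tseq C ^^ n) f 0 \<in> hom C (po n A) (po n B)"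
  using isD_hom[OF Tn_isD, of A B f n 0] by simp

lemma T_comp: assumes f: "isD C A B f" and g: "isD C B D g"
  shows "Tseq C (compD C f g) = compD C (Tseq C f) (Tseq C g)"
proof
  fix k
  have A: "A \<in> Obj C" and B: "B \<in> Obj C" and D: "D \<in> Obj C" using isD_0[OF f] isD_0[OF g] by auto
  have fg: "isD C A D (compD C f g)" by (rule compD_isD[OF f g])
  have L: "Tseq C (compD C f g) k \<in> hom C (po k (PO C A)) (PO C D)" by (rule T_hom[OF fg])
  have TfTg: "isD C (PO C A) (PO C D) (compD C (Tseq C f) (Tseq C g))"
    by (rule compD_isD[OF T_isD[OF f] T_isD[OF g]])
  have R: "compD C (Tseq C f) (Tseq C g) k \<in> hom C (po k (PO C A)) (PO C D)" by (rule isD_hom[OF TfTg])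
  have R': "compD C (Tseq C f) (Tseq C g) k = (Tseq C ^^ k) (Tseq C f) 0 \<cdot> Tseq C g k"
    by (simp add: compD_def)
  have a: "(Tseq C ^^ k) (Tseq C f) 0 \<in> hom C (po k (PO C A)) (po k (PO C B))" by (rule Tn0_hom[OF T_isD[OF f]])
  have b: "(Tseq C ^^ k) f 0 \<in> hom C (po k A) (po k B)" by (rule Tn0_hom[OF f])
  have p0: "pa k (Pr0 C A A) \<in> hom C (po k (PO C A)) (po k A)" by (rule pa_hom[OF pr0P[OF A]])
  have p0B: "pa k (Pr0 C B B) \<in> hom C (po k (PO C B)) (po k B)" by (rule pa_hom[OF pr0P[OF B]])
  have sw: "(Tseq C ^^ k) (Tseq C f) = (Tseq C ^^ Suc k) f"
    by (simp add: funpow_Suc_right del: funpow.simps)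
  show "Tseq C (compD C f g) k = compD C (Tseq C f) (Tseq C g) k"
  proof (rule PA_ext[OF L R D])
    have "compD C (Tseq C f) (Tseq C g) k \<cdot> Pr0 C D D = (Tseq C ^^ k) (Tseq C f) 0 \<cdot> (Tseq C g k \<cdot> Pr0 C D D)"
      unfolding R' by (rule assoc[OF a T_hom[OF g] pr0P[OF D]])
    also have "\<dots> = (Tseq C ^^ k) (Tseq C f) 0 \<cdot> (pa k (Pr0 C B B) \<cdot> g k)" by (simp add: T_pr0[OF g])
    also have "\<dots> = ((Tseq C ^^ k) (Tseq C f) 0 \<cdot> pa k (Pr0 C B B)) \<cdot> g k"
      by (rule assoc[symmetric, OF a p0B isD_hom[OF g]])
    also have "\<dots> = (pa k (Pr0 C A A) \<cdot> (Tseq C ^^ k) f 0) \<cdot> g k" using T_pi0[OF f, of k 0] by simp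
    also have "\<dots> = pa k (Pr0 C A A) \<cdot> compD C f g k"
      unfolding compD_def by (rule assoc[OF p0 b isD_hom[OF g]])
    also have "\<dots> = Tseq C (compD C f g) k \<cdot> Pr0 C D D" by (simp add: T_pr0[OF fg])
    finally show "Tseq C (compD C f g) k \<cdot> Pr0 C D D = compD C (Tseq C f) (Tseq C g) k \<cdot> Pr0 C D D" by simp
  next
    have "compD C (Tseq C f) (Tseq C g) k \<cdot> Pr1 C D D = (Tseq C ^^ k) (Tseq C f) 0 \<cdot> (Tseq C g k \<cdot> Pr1 C D D)"
      unfolding R' by (rule assoc[OF a T_hom[OF g] pr1P[OF D]])
    also have "\<dots> = (Tseq C ^^ Suc k) f 0 \<cdot> g (Suc k)" by (simp add: T_pr1[OF g] sw del: funpow.simps)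
    also have "\<dots> = Tseq C (compD C f g) k \<cdot> Pr1 C D D" using T_pr1[OF fg, of k] by (simp add: compD_def del: funpow.simps)
    finally show "Tseq C (compD C f g) k \<cdot> Pr1 C D D = compD C (Tseq C f) (Tseq C g) k \<cdot> Pr1 C D D" by simp
  qed
qed

lemma Tn_comp: assumes f: "isD C A B f" and g: "isD C B D g"
  shows "(Tseq C ^^ n) (compD C f g) = compD C ((Tseq C ^^ n) f) ((Tseq C ^^ n) g)"
proof (induction n)
  case (Suc n)
  then show ?case using T_comp[OF Tn_isD[OF f] Tn_isD[OF g], of n] by simp
qed simp

lemma compD_apply: "compD C f g n = (Tseq C ^^ n) f 0 \<cdot> g n"
  by (simp add: compD_def)

lemma compD_assoc: assumes f: "isD C A B f" and g: "isD C B D g" and h: "isD C D E h"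
  shows "compD C (compD C f g) h = compD C f (compD C g h)"
proof
  fix n
  have "compD C (compD C f g) h n = ((Tseq C ^^ n) f 0 \<cdot> (Tseq C ^^ n) g 0) \<cdot> h n"
    by (simp only: compD_apply Tn_comp[OF f g] funpow_0 id_apply)
  also have "\<dots> = (Tseq C ^^ n) f 0 \<cdot> ((Tseq C ^^ n) g 0 \<cdot> h n)"
    by (rule assoc[OF Tn0_hom[OF f] Tn0_hom[OF g] isD_hom[OF h]])
  finally show "compD C (compD C f g) h n = compD C f (compD C g h) n"
    by (simp add: compD_def del: funpow.simps)
qed

lemma Lf_isD: "x \<in> hom C A B \<Longrightarrow> isD C A B (Lf C A x)"
  unfolding isD_def Lf_def using comp_hom idseq_hom hom_obj by blast

lemma compD_Lf_r: assumes h: "isD C Z A h" and x: "x \<in> hom C A B"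
  shows "compD C h (Lf C A x) = (\<lambda>n. h n \<cdot> x)"
proof
  fix n
  have A: "A \<in> Obj C" using hom_obj x by blast
  have "compD C h (Lf C A x) n = (Tseq C ^^ n) h 0 \<cdot> (idseq C A n \<cdot> x)" by (simp add: compD_def Lf_def)
  also have "\<dots> = ((Tseq C ^^ n) h 0 \<cdot> idseq C A n) \<cdot> x"
    by (rule assoc[symmetric, OF Tn0_hom[OF h] idseq_hom[OF A] x])
  also have "\<dots> = h n \<cdot> x" using Tn_idr[OF h, of n 0] by simp
  finally show "compD C h (Lf C A x) n = h n \<cdot> x" .
qed

lemma Dbar_category: "category (Dbar C)"
  unfolding category_def
proof (intro conjI ballI impI)
  fix A assume "A \<in> Obj (Dbar C)" then show "Idt (Dbar C) A \<in> hom (Dbar C) A A"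
    by (simp add: hom_Dbar isD_idseq)
next
  fix f assume "f \<in> Arr (Dbar C)"
  then have f: "isD C (Dom C (f 0)) (Cod C (f 0)) f" by simp
  show "Dom (Dbar C) f \<in> Obj (Dbar C)" "Cod (Dbar C) f \<in> Obj (Dbar C)" using isD_0[OF f] by auto
  show "Cmp (Dbar C) (Idt (Dbar C) (Dom (Dbar C) f)) f = f" "Cmp (Dbar C) f (Idt (Dbar C) (Cod (Dbar C) f)) = f"
    using compD_idl[OF f] compD_idr[OF f] by auto
next
  fix f g assume "f \<in> Arr (Dbar C)" "g \<in> Arr (Dbar C)" "Cod (Dbar C) f = Dom (Dbar C) g"
  then have f: "isD C (Dom C (f 0)) (Cod C (f 0)) f" and g: "isD C (Cod C (f 0)) (Cod C (g 0)) g" by auto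
  show "Cmp (Dbar C) f g \<in> hom (Dbar C) (Dom (Dbar C) f) (Cod (Dbar C) g)"
    using compD_isD[OF f g] by (simp add: hom_Dbar)
next
  fix f g h assume "f \<in> Arr (Dbar C)" "g \<in> Arr (Dbar C)" "h \<in> Arr (Dbar C)"
    "Cod (Dbar C) f = Dom (Dbar C) g" "Cod (Dbar C) g = Dom (Dbar C) h"
  then have f: "isD C (Dom C (f 0)) (Cod C (f 0)) f" and g: "isD C (Cod C (f 0)) (Cod C (g 0)) g"
    and h: "isD C (Cod C (g 0)) (Cod C (h 0)) h" by auto
  show "Cmp (Dbar C) (Cmp (Dbar C) f g) h = Cmp (Dbar C) f (Cmp (Dbar C) g h)"
    using compD_assoc[OF f g h] by simp
qed

lemma Dbar_cartesian: "cartesian (Dbar C)"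
  unfolding cartesian_def
proof (intro conjI ballI allI)
  show "category (Dbar C)" by (rule Dbar_category)
  show "Trm (Dbar C) \<in> Obj (Dbar C)" using trm_obj by simp
next
  fix A assume A: "A \<in> Obj (Dbar C)"
  define h where "h = (\<lambda>n. THE h. h \<in> hom C (po n A) (Trm C))"
  have hn: "\<And>n. h n \<in> hom C (po n A) (Trm C)"
    unfolding h_def using theI'[OF trm_unique[OF po_obj]] A by simp
  show "\<exists>!h. h \<in> hom (Dbar C) A (Trm (Dbar C))"
  proof (rule ex1I[of _ h])
    show "h \<in> hom (Dbar C) A (Trm (Dbar C))" using hn by (simp add: hom_Dbar isD_def)
    fix h' assume "h' \<in> hom (Dbar C) A (Trm (Dbar C))"
    then have "\<And>n. h' n \<in> hom C (po n A) (Trm C)" by (simp add: hom_Dbar isD_def)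
    then show "h' = h" using hn trm_unique[OF po_obj] A by (simp add: fun_eq_iff) blast
  qed
next
  fix A B assume A: "A \<in> Obj (Dbar C)" and B: "B \<in> Obj (Dbar C)"
  then have A: "A \<in> Obj C" and B: "B \<in> Obj C" by auto
  show "Prd (Dbar C) A B \<in> Obj (Dbar C)" using prd_obj[OF A B] by simp
  show "Pr0 (Dbar C) A B \<in> hom (Dbar C) (Prd (Dbar C) A B) A"
    using Lf_isD[OF pr0_hom[OF A B]] by (simp add: hom_Dbar)
  show "Pr1 (Dbar C) A B \<in> hom (Dbar C) (Prd (Dbar C) A B) B"
    using Lf_isD[OF pr1_hom[OF A B]] by (simp add: hom_Dbar)
  fix Z
    fix f g assume "f \<in> hom (Dbar C) Z A" "g \<in> hom (Dbar C) Z B"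
    then have f: "isD C Z A f" and g: "isD C Z B g" by (auto simp: hom_Dbar)
    define h where "h = (\<lambda>n. pair C (f n) (g n))"
    have hD: "isD C Z (Prd C A B) h" unfolding h_def isD_def using pair_hom isD_hom f g by blast
    have e0: "\<And>h. isD C Z (Prd C A B) h \<Longrightarrow> compD C h (Lf C (Prd C A B) (Pr0 C A B)) = (\<lambda>n. h n \<cdot> Pr0 C A B)"
      using compD_Lf_r pr0_hom[OF A B] by blast
    have e1: "\<And>h. isD C Z (Prd C A B) h \<Longrightarrow> compD C h (Lf C (Prd C A B) (Pr1 C A B)) = (\<lambda>n. h n \<cdot> Pr1 C A B)"
      using compD_Lf_r pr1_hom[OF A B] by blast
    show "\<exists>!h. h \<in> hom (Dbar C) Z (Prd (Dbar C) A B) \<and>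
            Cmp (Dbar C) h (Pr0 (Dbar C) A B) = f \<and> Cmp (Dbar C) h (Pr1 (Dbar C) A B) = g"
    proof (rule ex1I[of _ h])
      show "h \<in> hom (Dbar C) Z (Prd (Dbar C) A B) \<and>
            Cmp (Dbar C) h (Pr0 (Dbar C) A B) = f \<and> Cmp (Dbar C) h (Pr1 (Dbar C) A B) = g"
        using hD e0[OF hD] e1[OF hD] pair_pr0[OF isD_hom[OF f] isD_hom[OF g]]
          pair_pr1[OF isD_hom[OF f] isD_hom[OF g]]
        by (simp add: hom_Dbar h_def fun_eq_iff)
    next
      fix h' assume "h' \<in> hom (Dbar C) Z (Prd (Dbar C) A B) \<and>
            Cmp (Dbar C) h' (Pr0 (Dbar C) A B) = f \<and> Cmp (Dbar C) h' (Pr1 (Dbar C) A B) = g"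
      then have h': "isD C Z (Prd C A B) h'" and c0: "(\<lambda>n. h' n \<cdot> Pr0 C A B) = f"
        and c1: "(\<lambda>n. h' n \<cdot> Pr1 C A B) = g"
        using e0 e1 by (auto simp: hom_Dbar)
      show "h' = h"
      proof
        fix n
        show "h' n = h n" unfolding h_def
          by (rule pair_unique[OF isD_hom[OF f] isD_hom[OF g] isD_hom[OF h'], symmetric])
             (use c0 c1 in \<open>auto simp: fun_eq_iff\<close>)
      qed
    qed
qed


lemma Lf_0: "x \<in> hom C A B \<Longrightarrow> Lf C A x 0 = x"
  by (simp add: Lf_def id_l)

lemma T_Lf: assumes x: "x \<in> hom C A B"
  shows "Tseq C (Lf C A x) = Lf C (PO C A) (PA C x)"
proof
  fix k
  have A: "A \<in> Obj C" and B: "B \<in> Obj C" using hom_obj x by auto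
  have L: "isD C A B (Lf C A x)" by (rule Lf_isD[OF x])
  have i: "idseq C (PO C A) k \<in> hom C (po k (PO C A)) (PO C A)" by (rule idseq_hom[OF PO_obj[OF A]])
  show "Tseq C (Lf C A x) k = Lf C (PO C A) (PA C x) k"
  proof (rule PA_ext[OF T_hom[OF L] _ B])
    show "Lf C (PO C A) (PA C x) k \<in> hom C (po k (PO C A)) (PO C B)"
      unfolding Lf_def by (rule comp_hom[OF i PA_hom[OF x]])
    have "Tseq C (Lf C A x) k \<cdot> Pr0 C B B = pa k (Pr0 C A A) \<cdot> (idseq C A k \<cdot> x)"
      using T_pr0[OF L, of k] by (simp add: Lf_def)
    also have "\<dots> = (idseq C (PO C A) k \<cdot> Pr0 C A A) \<cdot> x"
      using assoc[OF pa_hom[OF pr0P[OF A]] idseq_hom[OF A] x, symmetric] idseq_nat[OF pr0P[OF A], of k] by simp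
    also have "\<dots> = idseq C (PO C A) k \<cdot> (PA C x \<cdot> Pr0 C B B)"
      using assoc[OF i pr0P[OF A] x] PA_pr0[OF x] by simp
    also have "\<dots> = Lf C (PO C A) (PA C x) k \<cdot> Pr0 C B B"
      unfolding Lf_def by (rule assoc[symmetric, OF i PA_hom[OF x] pr0P[OF B]])
    finally show "Tseq C (Lf C A x) k \<cdot> Pr0 C B B = Lf C (PO C A) (PA C x) k \<cdot> Pr0 C B B" .
    have "Tseq C (Lf C A x) k \<cdot> Pr1 C B B = idseq C A (Suc k) \<cdot> x"
      using T_pr1[OF L, of k] by (simp add: Lf_def del: idseq.simps)
    also have "\<dots> = (idseq C (PO C A) k \<cdot> Pr1 C A A) \<cdot> x" by (simp add: idseq_Suc'[OF A] del: idseq.simps)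
    also have "\<dots> = idseq C (PO C A) k \<cdot> (PA C x \<cdot> Pr1 C B B)"
      using assoc[OF i pr1P[OF A] x] PA_pr1[OF x] by simp
    also have "\<dots> = Lf C (PO C A) (PA C x) k \<cdot> Pr1 C B B"
      unfolding Lf_def by (rule assoc[symmetric, OF i PA_hom[OF x] pr1P[OF B]])
    finally show "Tseq C (Lf C A x) k \<cdot> Pr1 C B B = Lf C (PO C A) (PA C x) k \<cdot> Pr1 C B B" .
  qed
qed

lemma Tn_Lf: assumes x: "x \<in> hom C A B" shows "(Tseq C ^^ k) (Lf C A x) = Lf C (po k A) (pa k x)"
  by (induction k) (auto simp: T_Lf[OF pa_hom[OF x]])

lemma compD_Lf_l: assumes x: "x \<in> hom C A B" and s: "isD C B D s"
  shows "compD C (Lf C A x) s = (\<lambda>k. pa k x \<cdot> s k)"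
proof
  fix k
  have A: "A \<in> Obj C" using hom_obj x by blast
  show "compD C (Lf C A x) s k = pa k x \<cdot> s k"
    using Tn_Lf[OF x, of k] id_l[OF pa_hom[OF x]]
    by (simp add: compD_apply Lf_def del: funpow.simps)
qed

end

lemma cartcat_Dbar: "cartcat C \<Longrightarrow> cartcat (Dbar C)"
  using cartcat.Dbar_cartesian cartcat.intro cartcat_def by blast

context cartcat
begin

interpretation D: cartcat "Dbar C" by (rule cartcat_Dbar, unfold_locales)

lemma pairD: assumes f: "isD C Z A f" and g: "isD C Z B g"
  shows "pair (Dbar C) f g = (\<lambda>k. pair C (f k) (g k))"
proof -
  have A: "A \<in> Obj C" and B: "B \<in> Obj C" using isD_0 f g by auto
  have hD: "isD C Z (Prd C A B) (\<lambda>k. pair C (f k) (g k))"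
    unfolding isD_def using pair_hom isD_hom f g by blast
  show ?thesis
  proof (rule D.pair_unique)
    show "f \<in> hom (Dbar C) Z A" "g \<in> hom (Dbar C) Z B" using f g by (auto simp: hom_Dbar)
    show "(\<lambda>k. pair C (f k) (g k)) \<in> hom (Dbar C) Z (Prd (Dbar C) A B)" using hD by (simp add: hom_Dbar)
    show "Cmp (Dbar C) (\<lambda>k. pair C (f k) (g k)) (Pr0 (Dbar C) A B) = f"
      using compD_Lf_r[OF hD pr0_hom[OF A B]] pair_pr0[OF isD_hom[OF f] isD_hom[OF g]] by simp
    show "Cmp (Dbar C) (\<lambda>k. pair C (f k) (g k)) (Pr1 (Dbar C) A B) = g"
      using compD_Lf_r[OF hD pr1_hom[OF A B]] pair_pr1[OF isD_hom[OF f] isD_hom[OF g]] by simp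
  qed
qed

lemma PA_D: assumes g: "isD C A B g"
  shows "PA (Dbar C) g = (\<lambda>k. pair C (pa k (Pr0 C A A) \<cdot> g k) (pa k (Pr1 C A A) \<cdot> g k))"
proof -
  have A: "A \<in> Obj C" using isD_0 g by auto
  have a: "isD C (PO C A) B (compD C (Lf C (PO C A) (Pr0 C A A)) g)"
    by (rule compD_isD[OF Lf_isD[OF pr0P[OF A]] g])
  have b: "isD C (PO C A) B (compD C (Lf C (PO C A) (Pr1 C A A)) g)"
    by (rule compD_isD[OF Lf_isD[OF pr1P[OF A]] g])
  show ?thesis
    using pairD[OF a b] compD_Lf_l[OF pr0P[OF A] g] compD_Lf_l[OF pr1P[OF A] g]
    by (simp add: PA_def isD_0[OF g] PO_def)
qed

lemma PA_D_Lf: assumes x: "x \<in> hom C A B"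
  shows "PA (Dbar C) (Lf C A x) = Lf C (PO C A) (PA C x)"
proof
  fix k
  have A: "A \<in> Obj C" and B: "B \<in> Obj C" using hom_obj x by auto
  have i: "idseq C (PO C A) k \<in> hom C (po k (PO C A)) (PO C A)" by (rule idseq_hom[OF PO_obj[OF A]])
  have e0: "pa k (Pr0 C A A) \<cdot> (idseq C A k \<cdot> x) = idseq C (PO C A) k \<cdot> (Pr0 C A A \<cdot> x)"
    using assoc[OF pa_hom[OF pr0P[OF A]] idseq_hom[OF A] x, symmetric]
      idseq_nat[OF pr0P[OF A], of k] assoc[OF i pr0P[OF A] x] by simp
  have e1: "pa k (Pr1 C A A) \<cdot> (idseq C A k \<cdot> x) = idseq C (PO C A) k \<cdot> (Pr1 C A A \<cdot> x)"
    using assoc[OF pa_hom[OF pr1P[OF A]] idseq_hom[OF A] x, symmetric]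
      idseq_nat[OF pr1P[OF A], of k] assoc[OF i pr1P[OF A] x] by simp
  have c0: "Pr0 C A A \<cdot> x \<in> hom C (PO C A) B" by (rule comp_hom[OF pr0P[OF A] x])
  have c1: "Pr1 C A A \<cdot> x \<in> hom C (PO C A) B" by (rule comp_hom[OF pr1P[OF A] x])
  show "PA (Dbar C) (Lf C A x) k = Lf C (PO C A) (PA C x) k"
    using PA_D[OF Lf_isD[OF x]] e0 e1 pair_comp[OF i c0 c1]
    by (simp add: Lf_def PA_alt[OF x])
qed

lemma paD_Lf: assumes x: "x \<in> hom C A B" shows "(PA (Dbar C) ^^ m) (Lf C A x) = Lf C (po m A) (pa m x)"
  by (induction m) (auto simp: PA_D_Lf[OF pa_hom[OF x]])

lemma Dn: "(Dseq ^^ n) f = (\<lambda>k. f (k + n))"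
  by (induction n) (auto simp: Dseq_def)

lemma delta_isD: assumes f: "isD C A B f" shows "isD C (po n A) B ((Dseq ^^ n) f)"
  using isD_hom[OF f] by (simp add: isD_def Dn po_add[symmetric])

lemma delta_isD2: assumes f: "isD C A B f" shows "isD (Dbar C) A B (\<lambda>n. (Dseq ^^ n) f)"
  unfolding isD_def using delta_isD[OF f] by (simp add: hom_Dbar)

lemma TD_delta: assumes f: "isD C A B f"
  shows "Tseq (Dbar C) (\<lambda>n. (Dseq ^^ n) f) = (\<lambda>n. (Dseq ^^ n) (Tseq C f))"
proof
  fix m
  have A: "A \<in> Obj C" using isD_0 f by auto
  have p: "pa m (Pr0 C A A) \<in> hom C (po m (PO C A)) (po m A)" by (rule pa_hom[OF pr0P[OF A]])
  have a: "isD C (po m (PO C A)) B (compD C (Lf C (po m (PO C A)) (pa m (Pr0 C A A))) ((Dseq ^^ m) f))"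
    by (rule compD_isD[OF Lf_isD[OF p] delta_isD[OF f]])
  have b: "isD C (po m (PO C A)) B ((Dseq ^^ Suc m) f)"
    using delta_isD[OF f, of "Suc m"] by (simp only: po_Suc')
  have "Tseq (Dbar C) (\<lambda>n. (Dseq ^^ n) f) m =
     pair (Dbar C) (compD C ((PA (Dbar C) ^^ m) (Lf C (PO C A) (Pr0 C A A))) ((Dseq ^^ m) f)) ((Dseq ^^ Suc m) f)"
    using D.Tseq_alt[OF delta_isD2[OF f], of m] by (simp add: PO_def del: funpow.simps)
  also have "\<dots> = pair (Dbar C) (compD C (Lf C (po m (PO C A)) (pa m (Pr0 C A A))) ((Dseq ^^ m) f)) ((Dseq ^^ Suc m) f)"
    by (simp only: paD_Lf[OF pr0P[OF A]])
  also have "\<dots> = (\<lambda>k. pair C (pa k (pa m (Pr0 C A A)) \<cdot> f (k + m)) (f (k + Suc m)))"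
    using pairD[OF a b] compD_Lf_l[OF p delta_isD[OF f]] by (simp add: Dn del: funpow.simps)
  also have "\<dots> = (Dseq ^^ m) (Tseq C f)"
    by (simp add: Dn Tseq_alt[OF f] pa_add del: funpow.simps)
  finally show "Tseq (Dbar C) (\<lambda>n. (Dseq ^^ n) f) m = (Dseq ^^ m) (Tseq C f)" .
qed


lemma TDn_delta: assumes f: "isD C A B f"
  shows "(Tseq (Dbar C) ^^ n) (\<lambda>k. (Dseq ^^ k) f) = (\<lambda>k. (Dseq ^^ k) ((Tseq C ^^ n) f))"
proof (induction n)
  case (Suc n)
  then show ?case using TD_delta[OF Tn_isD[OF f, of n]] by simp
qed simp

lemma comult_comp: assumes f: "isD C A B f" and g: "isD C B D g"
  shows "(\<lambda>n. (Dseq ^^ n) (compD C f g)) = compD (Dbar C) (\<lambda>n. (Dseq ^^ n) f) (\<lambda>n. (Dseq ^^ n) g)"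
proof (intro ext)
  fix n k
  show "(Dseq ^^ n) (compD C f g) k = compD (Dbar C) (\<lambda>n. (Dseq ^^ n) f) (\<lambda>n. (Dseq ^^ n) g) n k"
    using TDn_delta[OF f, of n]
    by (simp add: compD_def Dn funpow_add del: funpow.simps)
qed

lemma idseq_shift: assumes A: "A \<in> Obj C"
  shows "idseq C A (k + Suc n) = pa k (Pr1 C (po n A) (po n A)) \<cdot> idseq C A (k + n)"
proof -
  have X: "po n A \<in> Obj C" by (rule po_obj[OF A])
  have i: "idseq C (PO C (po n A)) k \<in> hom C (po k (PO C (po n A))) (PO C (po n A))"
    by (rule idseq_hom[OF PO_obj[OF X]])
  have "idseq C A (k + Suc n) = idseq C (PO C (po n A)) k \<cdot> (Pr1 C (po n A) (po n A) \<cdot> idseq C A n)"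
    using idseq_add[OF A, of k "Suc n"] by simp
  also have "\<dots> = (idseq C (PO C (po n A)) k \<cdot> Pr1 C (po n A) (po n A)) \<cdot> idseq C A n"
    by (rule assoc[symmetric, OF i pr1P[OF X] idseq_hom[OF A]])
  also have "\<dots> = (pa k (Pr1 C (po n A) (po n A)) \<cdot> idseq C (po n A) k) \<cdot> idseq C A n"
    using idseq_nat[OF pr1P[OF X], of k] by simp
  also have "\<dots> = pa k (Pr1 C (po n A) (po n A)) \<cdot> (idseq C (po n A) k \<cdot> idseq C A n)"
    by (rule assoc[OF pa_hom[OF pr1P[OF X]] idseq_hom[OF X] idseq_hom[OF A]])
  also have "\<dots> = pa k (Pr1 C (po n A) (po n A)) \<cdot> idseq C A (k + n)"
    using idseq_add[OF A, of k n] by simp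
  finally show ?thesis .
qed

lemma comult_id: assumes A: "A \<in> Obj C"
  shows "(\<lambda>n. (Dseq ^^ n) (idseq C A)) = idseq (Dbar C) A"
proof
  fix n
  show "(Dseq ^^ n) (idseq C A) = idseq (Dbar C) A n"
  proof (induction n)
    case 0 then show ?case by simp
  next
    case (Suc n)
    have X: "po n A \<in> Obj C" by (rule po_obj[OF A])
    have "idseq (Dbar C) A (Suc n) = compD C (Lf C (PO C (po n A)) (Pr1 C (po n A) (po n A))) ((Dseq ^^ n) (idseq C A))"
      using Suc by (simp add: PO_def)
    also have "\<dots> = (\<lambda>k. pa k (Pr1 C (po n A) (po n A)) \<cdot> idseq C A (k + n))"
      using compD_Lf_l[OF pr1P[OF X] delta_isD[OF isD_idseq[OF A], of n]] by (simp add: Dn)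
    also have "\<dots> = (Dseq ^^ Suc n) (idseq C A)"
      using idseq_shift[OF A] by (simp add: Dn del: funpow.simps)
    finally show ?case by simp
  qed
qed

lemma comult_Lf: assumes x: "x \<in> hom C X Y"
  shows "(\<lambda>n. (Dseq ^^ n) (Lf C X x)) = Lf (Dbar C) X (Lf C X x)"
proof
  fix n
  have X: "X \<in> Obj C" using hom_obj x by blast
  have "Lf (Dbar C) X (Lf C X x) n = compD C ((Dseq ^^ n) (idseq C X)) (Lf C X x)"
    using fun_cong[OF comult_id[OF X], of n] by (simp add: Lf_def)
  also have "\<dots> = (\<lambda>k. idseq C X (k + n) \<cdot> x)"
    using compD_Lf_r[OF delta_isD[OF isD_idseq[OF X], of n] x] by (simp add: Dn)
  also have "\<dots> = (Dseq ^^ n) (Lf C X x)" by (simp add: Dn Lf_def)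
  finally show "(Dseq ^^ n) (Lf C X x) = Lf (Dbar C) X (Lf C X x) n" by simp
qed

lemma comult_functor: "cart_functor (Dbar C) (Dbar (Dbar C)) comult"
  unfolding cart_functor_def is_functor_def
proof (intro conjI ballI impI)
  show "cartesian (Dbar C)" by (rule Dbar_cartesian)
  show "cartesian (Dbar (Dbar C))" by (rule D.Dbar_cartesian)
  show "fst comult (Trm (Dbar C)) = Trm (Dbar (Dbar C))" by (simp add: comult_def)
next
  fix A assume "A \<in> Obj (Dbar C)"
  then show "fst comult A \<in> Obj (Dbar (Dbar C))" by (simp add: comult_def)
next
  fix A assume "A \<in> Obj (Dbar C)"
  then show "snd comult (Idt (Dbar C) A) = Idt (Dbar (Dbar C)) (fst comult A)"
    using comult_id by (simp add: comult_def)
next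
  fix f assume "f \<in> Arr (Dbar C)"
  then have f: "isD C (Dom C (f 0)) (Cod C (f 0)) f" by simp
  show "snd comult f \<in> hom (Dbar (Dbar C)) (fst comult (Dom (Dbar C) f)) (fst comult (Cod (Dbar C) f))"
    using delta_isD2[OF f] by (simp add: comult_def hom_Dbar)
next
  fix f g assume "f \<in> Arr (Dbar C)" "g \<in> Arr (Dbar C)" "Cod (Dbar C) f = Dom (Dbar C) g"
  then have f: "isD C (Dom C (f 0)) (Cod C (f 0)) f" and g: "isD C (Cod C (f 0)) (Cod C (g 0)) g" by auto
  show "snd comult (Cmp (Dbar C) f g) = Cmp (Dbar (Dbar C)) (snd comult f) (snd comult g)"
    using comult_comp[OF f g] by (simp add: comult_def)
next
  fix A B assume "A \<in> Obj (Dbar C)" "B \<in> Obj (Dbar C)"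
  then have A: "A \<in> Obj C" and B: "B \<in> Obj C" by auto
  show "fst comult (Prd (Dbar C) A B) = Prd (Dbar (Dbar C)) (fst comult A) (fst comult B)"
    by (simp add: comult_def)
  show "snd comult (Pr0 (Dbar C) A B) = Pr0 (Dbar (Dbar C)) (fst comult A) (fst comult B)"
    using comult_Lf[OF pr0_hom[OF A B]] by (simp add: comult_def)
  show "snd comult (Pr1 (Dbar C) A B) = Pr1 (Dbar (Dbar C)) (fst comult A) (fst comult B)"
    using comult_Lf[OF pr1_hom[OF A B]] by (simp add: comult_def)
qed

lemma counit_functor: "cart_functor (Dbar C) C counit"
  unfolding cart_functor_def is_functor_def
proof (intro conjI ballI impI)
  show "cartesian (Dbar C)" by (rule Dbar_cartesian)
  show "cartesian C" by (rule cart)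
  show "fst counit (Trm (Dbar C)) = Trm C" by (simp add: counit_def)
next
  fix A assume "A \<in> Obj (Dbar C)"
  then show "fst counit A \<in> Obj C" by (simp add: counit_def)
next
  fix A assume "A \<in> Obj (Dbar C)"
  then show "snd counit (Idt (Dbar C) A) = Idt C (fst counit A)" by (simp add: counit_def)
next
  fix f assume "f \<in> Arr (Dbar C)"
  then have f: "isD C (Dom C (f 0)) (Cod C (f 0)) f" by simp
  show "snd counit f \<in> hom C (fst counit (Dom (Dbar C) f)) (fst counit (Cod (Dbar C) f))"
    using isD_0[OF f] by (simp add: counit_def)
next
  fix f g assume "f \<in> Arr (Dbar C)" "g \<in> Arr (Dbar C)" "Cod (Dbar C) f = Dom (Dbar C) g"
  show "snd counit (Cmp (Dbar C) f g) = Cmp C (snd counit f) (snd counit g)"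
    by (simp add: counit_def compD_def)
next
  fix A B assume "A \<in> Obj (Dbar C)" "B \<in> Obj (Dbar C)"
  then have A: "A \<in> Obj C" and B: "B \<in> Obj C" by auto
  show "fst counit (Prd (Dbar C) A B) = Prd C (fst counit A) (fst counit B)"
    by (simp add: counit_def)
  show "snd counit (Pr0 (Dbar C) A B) = Pr0 C (fst counit A) (fst counit B)"
    using Lf_0[OF pr0_hom[OF A B]] by (simp add: counit_def)
  show "snd counit (Pr1 (Dbar C) A B) = Pr1 C (fst counit A) (fst counit B)"
    using Lf_0[OF pr1_hom[OF A B]] by (simp add: counit_def)
qed

end


context
  fixes C :: "('o, 'a) cart" and Y :: "('p, 'b) cart" and F :: "('o, 'a, 'p, 'b) cfun"
  assumes cf: "cart_functor C Y F"
begin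

lemma cfX: "cartcat C" using cf by (simp add: cart_functor_def cartcat_def)
lemma cfY: "cartcat Y" using cf by (simp add: cart_functor_def cartcat_def)
lemma cfF: "is_functor C Y F" using cf by (simp add: cart_functor_def)

lemma F_obj: "A \<in> Obj C \<Longrightarrow> fst F A \<in> Obj Y"
  using cfF by (simp add: is_functor_def)

lemma F_hom: "f \<in> hom C A B \<Longrightarrow> snd F f \<in> hom Y (fst F A) (fst F B)"
  using cfF by (auto simp: is_functor_def hom_def)

lemma F_cmp: "f \<in> hom C A B \<Longrightarrow> g \<in> hom C B D \<Longrightarrow> snd F (Cmp C f g) = Cmp Y (snd F f) (snd F g)"
  using cfF by (auto simp: is_functor_def hom_def)

lemma F_id: "A \<in> Obj C \<Longrightarrow> snd F (Idt C A) = Idt Y (fst F A)"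
  using cfF by (simp add: is_functor_def)

lemma F_prd: "A \<in> Obj C \<Longrightarrow> B \<in> Obj C \<Longrightarrow> fst F (Prd C A B) = Prd Y (fst F A) (fst F B)"
  using cf by (simp add: cart_functor_def)
lemma F_pr0: "A \<in> Obj C \<Longrightarrow> B \<in> Obj C \<Longrightarrow> snd F (Pr0 C A B) = Pr0 Y (fst F A) (fst F B)"
  using cf by (simp add: cart_functor_def)
lemma F_pr1: "A \<in> Obj C \<Longrightarrow> B \<in> Obj C \<Longrightarrow> snd F (Pr1 C A B) = Pr1 Y (fst F A) (fst F B)"
  using cf by (simp add: cart_functor_def)
lemma F_trm: "fst F (Trm C) = Trm Y"
  using cf by (simp add: cart_functor_def)

lemma F_PO: "A \<in> Obj C \<Longrightarrow> fst F (PO C A) = PO Y (fst F A)"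
  by (simp add: PO_def F_prd)

lemma F_po: "A \<in> Obj C \<Longrightarrow> fst F ((PO C ^^ n) A) = (PO Y ^^ n) (fst F A)"
  by (induction n) (auto simp: F_PO cartcat.po_obj[OF cfX])

lemma F_pair: assumes f: "f \<in> hom C Z A" and g: "g \<in> hom C Z B"
  shows "snd F (pair C f g) = pair Y (snd F f) (snd F g)"
proof -
  have A: "A \<in> Obj C" and B: "B \<in> Obj C" using cartcat.hom_obj[OF cfX] f g by auto
  have p: "pair C f g \<in> hom C Z (Prd C A B)" by (rule cartcat.pair_hom[OF cfX f g])
  show ?thesis
  proof (rule cartcat.pair_unique[OF cfY F_hom[OF f] F_hom[OF g], symmetric])
    show "snd F (pair C f g) \<in> hom Y (fst F Z) (Prd Y (fst F A) (fst F B))"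
      using F_hom[OF p] by (simp add: F_prd[OF A B])
    show "Cmp Y (snd F (pair C f g)) (Pr0 Y (fst F A) (fst F B)) = snd F f"
      using F_cmp[OF p cartcat.pr0_hom[OF cfX A B]] cartcat.pair_pr0[OF cfX f g] by (simp add: F_pr0[OF A B])
    show "Cmp Y (snd F (pair C f g)) (Pr1 Y (fst F A) (fst F B)) = snd F g"
      using F_cmp[OF p cartcat.pr1_hom[OF cfX A B]] cartcat.pair_pr1[OF cfX f g] by (simp add: F_pr1[OF A B])
  qed
qed

lemma F_PA: assumes f: "f \<in> hom C A B" shows "snd F (PA C f) = PA Y (snd F f)"
proof -
  have A: "A \<in> Obj C" using cartcat.hom_obj[OF cfX] f by auto
  have p0: "Cmp C (Pr0 C A A) f \<in> hom C (Prd C A A) B" by (rule cartcat.comp_hom[OF cfX cartcat.pr0_hom[OF cfX A A] f])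
  have p1: "Cmp C (Pr1 C A A) f \<in> hom C (Prd C A A) B" by (rule cartcat.comp_hom[OF cfX cartcat.pr1_hom[OF cfX A A] f])
  show ?thesis
    unfolding cartcat.PA_alt[OF cfX f] cartcat.PA_alt[OF cfY F_hom[OF f]]
    by (simp add: F_pair[OF p0 p1] F_cmp[OF cartcat.pr0_hom[OF cfX A A] f]
        F_cmp[OF cartcat.pr1_hom[OF cfX A A] f] F_pr0[OF A A] F_pr1[OF A A])
qed

lemma F_pa: assumes f: "f \<in> hom C A B" shows "snd F ((PA C ^^ n) f) = (PA Y ^^ n) (snd F f)"
  by (induction n) (auto simp: F_PA[OF cartcat.pa_hom[OF cfX f]])

lemma F_idseq: assumes A: "A \<in> Obj C" shows "snd F (idseq C A n) = idseq Y (fst F A) n"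
proof (induction n)
  case 0 then show ?case by (simp add: F_id[OF A])
next
  case (Suc n)
  have X: "(PO C ^^ n) A \<in> Obj C" by (rule cartcat.po_obj[OF cfX A])
  show ?case
    using F_cmp[OF cartcat.pr1P[OF cfX X] cartcat.idseq_hom[OF cfX A]] Suc
    by (simp add: F_pr1[OF X X] F_po[OF A])
qed

lemma F_isD: assumes f: "isD C A B f" shows "isD Y (fst F A) (fst F B) (\<lambda>n. snd F (f n))"
proof -
  have A: "A \<in> Obj C" using cartcat.isD_0[OF cfX f] by simp
  show ?thesis unfolding isD_def
    using F_hom[OF cartcat.isD_hom[OF cfX f]] by (simp add: F_po[OF A])
qed

lemma F_T: assumes f: "isD C A B f" shows "(\<lambda>n. snd F (Tseq C f n)) = Tseq Y (\<lambda>n. snd F (f n))"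
proof
  fix n
  have A: "A \<in> Obj C" using cartcat.isD_0[OF cfX f] by simp
  have p: "(PA C ^^ n) (Pr0 C A A) \<in> hom C ((PO C ^^ n) (PO C A)) ((PO C ^^ n) A)"
    by (rule cartcat.pa_hom[OF cfX cartcat.pr0P[OF cfX A]])
  show "snd F (Tseq C f n) = Tseq Y (\<lambda>n. snd F (f n)) n"
    unfolding cartcat.Tseq_alt[OF cfX f] cartcat.Tseq_alt[OF cfY F_isD[OF f]]
    using cartcat.T_parts[OF cfX f, of n]
    by (simp add: F_pair F_cmp[OF p cartcat.isD_hom[OF cfX f]] F_pa[OF cartcat.pr0P[OF cfX A]]
        F_pr0[OF A A] F_PO[OF A] del: funpow.simps)
qed

lemma F_Tn: assumes f: "isD C A B f"
  shows "(\<lambda>k. snd F ((Tseq C ^^ n) f k)) = (Tseq Y ^^ n) (\<lambda>k. snd F (f k))"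
proof (induction n)
  case (Suc n)
  then show ?case using F_T[OF cartcat.Tn_isD[OF cfX f, of n]] by simp
qed simp

lemma F_compD: assumes f: "isD C A B f" and g: "isD C B D g"
  shows "(\<lambda>n. snd F (compD C f g n)) = compD Y (\<lambda>n. snd F (f n)) (\<lambda>n. snd F (g n))"
proof
  fix n
  show "snd F (compD C f g n) = compD Y (\<lambda>n. snd F (f n)) (\<lambda>n. snd F (g n)) n"
    using F_cmp[OF cartcat.Tn0_hom[OF cfX f, of n] cartcat.isD_hom[OF cfX g, of n]]
      fun_cong[OF F_Tn[OF f, of n], of 0]
    by (simp add: compD_def del: funpow.simps)
qed

lemma F_Lf: assumes x: "x \<in> hom C X Z"
  shows "(\<lambda>n. snd F (Lf C X x n)) = Lf Y (fst F X) (snd F x)"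
proof
  fix n
  have X: "X \<in> Obj C" using cartcat.hom_obj[OF cfX] x by auto
  show "snd F (Lf C X x n) = Lf Y (fst F X) (snd F x) n"
    using F_cmp[OF cartcat.idseq_hom[OF cfX X, of n] x] by (simp add: Lf_def F_idseq[OF X])
qed

lemma Dbar_map_functor: "cart_functor (Dbar C) (Dbar Y) (Dbar_map F)"
  unfolding cart_functor_def is_functor_def
proof (intro conjI ballI impI)
  show "cartesian (Dbar C)" by (rule cartcat.Dbar_cartesian[OF cfX])
  show "cartesian (Dbar Y)" by (rule cartcat.Dbar_cartesian[OF cfY])
  show "fst (Dbar_map F) (Trm (Dbar C)) = Trm (Dbar Y)" by (simp add: Dbar_map_def F_trm)
next
  fix A assume "A \<in> Obj (Dbar C)"
  then show "fst (Dbar_map F) A \<in> Obj (Dbar Y)" by (simp add: Dbar_map_def F_obj)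
next
  fix A assume "A \<in> Obj (Dbar C)"
  then show "snd (Dbar_map F) (Idt (Dbar C) A) = Idt (Dbar Y) (fst (Dbar_map F) A)"
    by (simp add: Dbar_map_def F_idseq)
next
  fix f assume "f \<in> Arr (Dbar C)"
  then have f: "isD C (Dom C (f 0)) (Cod C (f 0)) f" by simp
  show "snd (Dbar_map F) f \<in> hom (Dbar Y) (fst (Dbar_map F) (Dom (Dbar C) f)) (fst (Dbar_map F) (Cod (Dbar C) f))"
    using F_isD[OF f] by (simp add: Dbar_map_def hom_Dbar)
next
  fix f g assume "f \<in> Arr (Dbar C)" "g \<in> Arr (Dbar C)" "Cod (Dbar C) f = Dom (Dbar C) g"
  then have f: "isD C (Dom C (f 0)) (Cod C (f 0)) f" and g: "isD C (Cod C (f 0)) (Cod C (g 0)) g" by auto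
  show "snd (Dbar_map F) (Cmp (Dbar C) f g) = Cmp (Dbar Y) (snd (Dbar_map F) f) (snd (Dbar_map F) g)"
    using F_compD[OF f g] by (simp add: Dbar_map_def)
next
  fix A B assume "A \<in> Obj (Dbar C)" "B \<in> Obj (Dbar C)"
  then have A: "A \<in> Obj C" and B: "B \<in> Obj C" by auto
  show "fst (Dbar_map F) (Prd (Dbar C) A B) = Prd (Dbar Y) (fst (Dbar_map F) A) (fst (Dbar_map F) B)"
    by (simp add: Dbar_map_def F_prd[OF A B])
  show "snd (Dbar_map F) (Pr0 (Dbar C) A B) = Pr0 (Dbar Y) (fst (Dbar_map F) A) (fst (Dbar_map F) B)"
    using F_Lf[OF cartcat.pr0_hom[OF cfX A B]] by (simp add: Dbar_map_def F_prd[OF A B] F_pr0[OF A B])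
  show "snd (Dbar_map F) (Pr1 (Dbar C) A B) = Pr1 (Dbar Y) (fst (Dbar_map F) A) (fst (Dbar_map F) B)"
    using F_Lf[OF cartcat.pr1_hom[OF cfX A B]] by (simp add: Dbar_map_def F_prd[OF A B] F_pr1[OF A B])
qed

end


lemma Dn_gen: "(Dseq ^^ n) f = (\<lambda>k. f (k + n))"
  by (induction n) (auto simp: Dseq_def)

theorem proposition3p19:
  fixes X :: "('o, 'a) cart" and Y :: "('p, 'b) cart" and Z :: "('q, 'c) cart"
    and F :: "('o, 'a, 'p, 'b) cfun" and G :: "('p, 'b, 'q, 'c) cfun"
  shows
    \<comment> \<open>D-bar is an endofunctor of CART\<close>
    "(cartesian X \<longrightarrow> cartesian (Dbar X)) \<and>
     (cart_functor X Y F \<longrightarrow> cart_functor (Dbar X) (Dbar Y) (Dbar_map F)) \<and>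
     (cartesian X \<longrightarrow> feq (Dbar X) (Dbar_map (fid :: ('o, 'a, 'o, 'a) cfun)) fid) \<and>
     (cart_functor X Y F \<and> cart_functor Y Z G \<longrightarrow>
        feq (Dbar X) (Dbar_map (fcmp F G)) (fcmp (Dbar_map F) (Dbar_map G))) \<and>
     \<comment> \<open>counit: CART morphisms, natural\<close>
     (cartesian X \<longrightarrow> cart_functor (Dbar X) X counit) \<and>
     (cart_functor X Y F \<longrightarrow> feq (Dbar X) (fcmp (Dbar_map F) counit) (fcmp counit F)) \<and>
     \<comment> \<open>comultiplication: CART morphisms, natural\<close>
     (cartesian X \<longrightarrow> cart_functor (Dbar X) (Dbar (Dbar X)) comult) \<and>
     (cart_functor X Y F \<longrightarrow>
        feq (Dbar X) (fcmp (Dbar_map F) comult) (fcmp comult (Dbar_map (Dbar_map F)))) \<and>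
     \<comment> \<open>comonad laws\<close>
     (cartesian X \<longrightarrow>
        feq (Dbar X) (fcmp comult (counit :: ('o, nat \<Rightarrow> nat \<Rightarrow> 'a, 'o, nat \<Rightarrow> 'a) cfun)) fid \<and>
        feq (Dbar X) (fcmp comult (Dbar_map (counit :: ('o, nat \<Rightarrow> 'a, 'o, 'a) cfun))) fid \<and>
        feq (Dbar X) (fcmp comult (comult :: ('o, nat \<Rightarrow> nat \<Rightarrow> 'a, 'o, nat \<Rightarrow> nat \<Rightarrow> nat \<Rightarrow> 'a) cfun))
                     (fcmp comult (Dbar_map (comult :: ('o, nat \<Rightarrow> 'a, 'o, nat \<Rightarrow> nat \<Rightarrow> 'a) cfun))))"
proof (intro conjI impI)
  assume "cartesian X"
  then have X: "cartcat X" by (simp add: cartcat_def)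
  show "cartesian (Dbar X)" by (rule cartcat.Dbar_cartesian[OF X])
  show "cart_functor (Dbar X) X counit" by (rule cartcat.counit_functor[OF X])
  show "cart_functor (Dbar X) (Dbar (Dbar X)) comult" by (rule cartcat.comult_functor[OF X])
next
  assume "cart_functor X Y F"
  then show "cart_functor (Dbar X) (Dbar Y) (Dbar_map F)" by (rule Dbar_map_functor)
next
  show "feq (Dbar X) (Dbar_map (fid :: ('o, 'a, 'o, 'a) cfun)) fid"
    by (simp add: feq_def Dbar_map_def fid_def)
  show "feq (Dbar X) (Dbar_map (fcmp F G)) (fcmp (Dbar_map F) (Dbar_map G))"
    by (simp add: feq_def Dbar_map_def fcmp_def)
  show "feq (Dbar X) (fcmp (Dbar_map F) counit) (fcmp counit F)"
    by (simp add: feq_def Dbar_map_def fcmp_def counit_def)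
  show "feq (Dbar X) (fcmp (Dbar_map F) comult) (fcmp comult (Dbar_map (Dbar_map F)))"
    by (simp add: feq_def Dbar_map_def fcmp_def comult_def Dn_gen)
  show "feq (Dbar X) (fcmp comult (counit :: ('o, nat \<Rightarrow> nat \<Rightarrow> 'a, 'o, nat \<Rightarrow> 'a) cfun)) fid"
    by (simp add: feq_def fcmp_def comult_def counit_def fid_def)
  show "feq (Dbar X) (fcmp comult (Dbar_map (counit :: ('o, nat \<Rightarrow> 'a, 'o, 'a) cfun))) fid"
    by (simp add: feq_def fcmp_def comult_def counit_def fid_def Dbar_map_def Dn_gen)
  show "feq (Dbar X) (fcmp comult (comult :: ('o, nat \<Rightarrow> nat \<Rightarrow> 'a, 'o, nat \<Rightarrow> nat \<Rightarrow> nat \<Rightarrow> 'a) cfun))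
                     (fcmp comult (Dbar_map (comult :: ('o, nat \<Rightarrow> 'a, 'o, nat \<Rightarrow> nat \<Rightarrow> 'a) cfun)))"
    by (simp add: feq_def fcmp_def comult_def Dbar_map_def Dn_gen add.assoc)
qed

end
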